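(* For any graph $G$ with $m\ge1$ edges and any integer $1\le k\le n$, $Q_k^+\ge\left(1-\frac1k\right)Q_{\mathrm{opt}}$.
   Context: $G=(V,E)$ is an undirected simple graph, $V=\{1,\dots,n\}$, $m=|E|\ge1$, adjacency matrix $A$, degrees $d_i$. For a partition $\mathcal{C}$ of $V$ into nonempty communities, its modularity is $Q(\mathcal{C})=\frac{1}{2m}\sum_{i,j}\left(A_{i,j}-\frac{d_id_j}{2m}\right)\delta_{i,j}$, the sum over all ordered pairs $(i,j)$ including $i=j$, where $\delta_{i,j}=1$ if $i,j$ lie in the same community and $0$ otherwise. $Q_k$ denotes the maximum modularity over partitions of $V$ into exactly $k$ nonempty communities, $Q_k^+=\max_{1\le i\le k}Q_i$, and $Q_{\mathrm{opt}}=Q_n^+$ is the maximum modularity over all partitions. *)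

theory Defs
  imports Complex_Main "HOL-Library.Disjoint_Sets"
begin

definition simple_graph :: "nat \<Rightarrow> (nat \<Rightarrow> nat \<Rightarrow> bool) \<Rightarrow> bool" where
  "simple_graph n E \<longleftrightarrow>
     (\<forall>i j. E i j \<longrightarrow> i \<in> {1..n} \<and> j \<in> {1..n}) \<and>
     (\<forall>i j. E i j \<longrightarrow> E j i) \<and> (\<forall>i. \<not> E i i)"

definition adj :: "(nat \<Rightarrow> nat \<Rightarrow> bool) \<Rightarrow> nat \<Rightarrow> nat \<Rightarrow> real" where
  "adj E i j = (if E i j then 1 else 0)"

definition degree :: "nat \<Rightarrow> (nat \<Rightarrow> nat \<Rightarrow> bool) \<Rightarrow> nat \<Rightarrow> real" where
  "degree n E i = (\<Sum>j\<in>{1..n}. adj E i j)"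

definition num_edges :: "nat \<Rightarrow> (nat \<Rightarrow> nat \<Rightarrow> bool) \<Rightarrow> nat" where
  "num_edges n E = card {{i, j} | i j. i \<in> {1..n} \<and> j \<in> {1..n} \<and> E i j}"

definition same_comm :: "nat set set \<Rightarrow> nat \<Rightarrow> nat \<Rightarrow> bool" where
  "same_comm P i j \<longleftrightarrow> (\<exists>C\<in>P. i \<in> C \<and> j \<in> C)"

definition modularity :: "nat \<Rightarrow> (nat \<Rightarrow> nat \<Rightarrow> bool) \<Rightarrow> nat set set \<Rightarrow> real" where
  "modularity n E P =
     (let m = real (num_edges n E) in
      (1 / (2 * m)) * (\<Sum>i\<in>{1..n}. \<Sum>j\<in>{1..n}.
         (adj E i j - degree n E i * degree n E j / (2 * m)) *
         (if same_comm P i j then 1 else 0)))"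

definition Qk :: "nat \<Rightarrow> (nat \<Rightarrow> nat \<Rightarrow> bool) \<Rightarrow> nat \<Rightarrow> real" where
  "Qk n E k = Max (modularity n E ` {P. partition_on {1..n} P \<and> card P = k})"

definition Qk_plus :: "nat \<Rightarrow> (nat \<Rightarrow> nat \<Rightarrow> bool) \<Rightarrow> nat \<Rightarrow> real" where
  "Qk_plus n E k = Max ((\<lambda>i. Qk n E i) ` {1..k})"

definition Q_opt :: "nat \<Rightarrow> (nat \<Rightarrow> nat \<Rightarrow> bool) \<Rightarrow> real" where
  "Q_opt n E = Qk_plus n E n"

end

theory Submission
  imports Defs "HOL-Library.FuncSet"
begin

definition Bm :: "nat \<Rightarrow> (nat \<Rightarrow> nat \<Rightarrow> bool) \<Rightarrow> nat \<Rightarrow> nat \<Rightarrow> real" where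
  "Bm n E i j = adj E i j - degree n E i * degree n E j / (2 * real (num_edges n E))"

definition Ql :: "nat \<Rightarrow> (nat \<Rightarrow> nat \<Rightarrow> bool) \<Rightarrow> (nat \<Rightarrow> 'a) \<Rightarrow> real" where
  "Ql n E h = (1 / (2 * real (num_edges n E))) *
     (\<Sum>i\<in>{1..n}. \<Sum>j\<in>{1..n}. Bm n E i j * (if h i = h j then 1 else 0))"

lemma modularity_Ql:
  assumes "\<And>i j. i \<in> {1..n} \<Longrightarrow> j \<in> {1..n} \<Longrightarrow> same_comm P i j \<longleftrightarrow> h i = h j"
  shows "modularity n E P = Ql n E h"
  unfolding modularity_def Ql_def Bm_def Let_def
  by (intro arg_cong[where f="(*) _"] sum.cong refl) (simp add: assms)

definition part_of :: "nat \<Rightarrow> (nat \<Rightarrow> 'a) \<Rightarrow> nat set set" where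
  "part_of n h = (\<lambda>t. {i\<in>{1..n}. h i = t}) ` (h ` {1..n})"

lemma part_of_partition: "partition_on {1..n} (part_of n h)"
  unfolding partition_on_def part_of_def disjoint_def by auto

lemma part_of_card: "card (part_of n h) = card (h ` {1..n})"
  unfolding part_of_def
proof (rule card_image, rule inj_onI)
  fix x y assume x: "x \<in> h ` {1..n}" and y: "y \<in> h ` {1..n}"
    and eq: "{i \<in> {1..n}. h i = x} = {i \<in> {1..n}. h i = y}"
  from x obtain i where i: "i \<in> {1..n}" "h i = x" by blast
  hence "i \<in> {i \<in> {1..n}. h i = y}" using eq by blast
  thus "x = y" using i by simp
qed

lemma part_of_same: "i \<in> {1..n} \<Longrightarrow> j \<in> {1..n} \<Longrightarrow> same_comm (part_of n h) i j \<longleftrightarrow> h i = h j"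
  unfolding same_comm_def part_of_def by auto

definition cls :: "nat set set \<Rightarrow> nat \<Rightarrow> nat set" where
  "cls P i = (THE C. C \<in> P \<and> i \<in> C)"

lemma part_unique:
  assumes "partition_on A P" "C \<in> P" "D \<in> P" "i \<in> C" "i \<in> D"
  shows "C = D"
proof (rule ccontr)
  assume "C \<noteq> D"
  hence "C \<inter> D = {}" using disjointD[OF partition_onD2[OF assms(1)] assms(2,3)] by simp
  thus False using assms(4,5) by blast
qed

lemma cls_in:
  assumes "partition_on A P" "i \<in> A"
  shows "cls P i \<in> P \<and> i \<in> cls P i"
proof -
  have "i \<in> \<Union>P" using partition_onD1[OF assms(1)] assms(2) by simp
  then obtain C where C: "C \<in> P" "i \<in> C" by (rule UnionE)
  have "(THE C. C \<in> P \<and> i \<in> C) = C"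
  proof (rule the_equality)
    show "C \<in> P \<and> i \<in> C" using C by simp
  next
    fix D assume "D \<in> P \<and> i \<in> D"
    thus "D = C" using part_unique[OF assms(1)] C by blast
  qed
  thus ?thesis using C by (simp add: cls_def)
qed

lemma partition_same:
  assumes "partition_on A P" "i \<in> A" "j \<in> A"
  shows "same_comm P i j \<longleftrightarrow> cls P i = cls P j"
proof
  assume "same_comm P i j"
  then obtain C where C: "C \<in> P" "i \<in> C" "j \<in> C" by (auto simp: same_comm_def)
  have ci: "cls P i \<in> P" "i \<in> cls P i" using cls_in[OF assms(1,2)] by auto
  have cj: "cls P j \<in> P" "j \<in> cls P j" using cls_in[OF assms(1,3)] by auto
  have "cls P i = C" by (rule part_unique[OF assms(1) ci(1) C(1) ci(2) C(2)])
  moreover have "cls P j = C" by (rule part_unique[OF assms(1) cj(1) C(1) cj(2) C(3)])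
  ultimately show "cls P i = cls P j" by simp
next
  assume "cls P i = cls P j"
  thus "same_comm P i j" using cls_in[OF assms(1,2)] cls_in[OF assms(1,3)]
    unfolding same_comm_def by metis
qed

lemma handshake:
  assumes g: "simple_graph n E"
  shows "(\<Sum>i\<in>{1..n}. \<Sum>j\<in>{1..n}. adj E i j) = 2 * real (num_edges n E)"
proof -
  let ?Pr = "{(i,j). i\<in>{1..n} \<and> j\<in>{1..n} \<and> E i j}"
  let ?S1 = "{(i,j). i\<in>{1..n} \<and> j\<in>{1..n} \<and> E i j \<and> i<j}"
  let ?S2 = "{(i,j). i\<in>{1..n} \<and> j\<in>{1..n} \<and> E i j \<and> j<i}"
  have sym: "\<And>i j. E i j \<Longrightarrow> E j i" and irr: "\<And>i. \<not> E i i"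
    using g by (auto simp: simple_graph_def)
  have fin1: "finite ?S1"
    by (rule finite_subset[of _ "{1..n}\<times>{1..n}"]) auto
  have fin2: "finite ?S2"
    by (rule finite_subset[of _ "{1..n}\<times>{1..n}"]) auto
  have s1: "(\<Sum>i\<in>{1..n}. \<Sum>j\<in>{1..n}. adj E i j) = (\<Sum>p\<in>{1..n}\<times>{1..n}. adj E (fst p) (snd p))"
    by (simp add: sum.cartesian_product split_def)
  have s2: "(\<Sum>p\<in>{1..n}\<times>{1..n}. adj E (fst p) (snd p)) = (\<Sum>p\<in>{1..n}\<times>{1..n}. if p \<in> ?Pr then 1 else 0)"
    by (intro sum.cong) (auto simp: adj_def)
  have s3: "(\<Sum>p\<in>{1..n}\<times>{1..n}. if p \<in> ?Pr then 1 else (0::real)) = (\<Sum>p\<in>{p\<in>{1..n}\<times>{1..n}. p\<in>?Pr}. 1)"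
    by (rule sum.inter_filter[symmetric]) simp
  have s4: "{p\<in>{1..n}\<times>{1..n}. p\<in>?Pr} = ?S1 \<union> ?S2"
  proof (rule set_eqI)
    fix p :: "nat \<times> nat"
    obtain i j where p: "p = (i,j)" by (cases p)
    show "p \<in> {p\<in>{1..n}\<times>{1..n}. p\<in>?Pr} \<longleftrightarrow> p \<in> ?S1 \<union> ?S2"
      unfolding p using irr[of i] by (cases "i < j"; cases "j < i") auto
  qed
  have s5: "card (?S1 \<union> ?S2) = card ?S1 + card ?S2"
    using fin1 fin2 by (intro card_Un_disjoint) auto
  have s6: "?S2 = prod.swap ` ?S1"
  proof (rule set_eqI, rule iffI)
    fix p assume "p \<in> ?S2"
    then obtain i j where "p = (i,j)" "i\<in>{1..n}" "j\<in>{1..n}" "E i j" "j<i" by blast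
    thus "p \<in> prod.swap ` ?S1" using sym by (auto intro!: image_eqI[where x="(j,i)"])
  next
    fix p assume "p \<in> prod.swap ` ?S1"
    then obtain i j where "p = (j,i)" "i\<in>{1..n}" "j\<in>{1..n}" "E i j" "i<j" by auto
    thus "p \<in> ?S2" using sym by auto
  qed
  have s7: "card (prod.swap ` ?S1) = card ?S1" by (rule card_image) simp
  have s8: "card ?S1 = num_edges n E"
  proof -
    have eq: "{{i, j} | i j. i \<in> {1..n} \<and> j \<in> {1..n} \<and> E i j} = (\<lambda>(i,j). {i,j}) ` ?S1"
    proof (rule set_eqI, rule iffI)
      fix x assume "x \<in> {{i, j} | i j. i \<in> {1..n} \<and> j \<in> {1..n} \<and> E i j}"
      then obtain i j where ij: "x = {i,j}" "i \<in> {1..n}" "j \<in> {1..n}" "E i j" by blast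
      show "x \<in> (\<lambda>(i,j). {i,j}) ` ?S1"
      proof (cases "i < j")
        case True thus ?thesis using ij by (auto intro!: image_eqI[where x="(i,j)"])
      next
        case False
        hence "j < i" using ij irr by (metis linorder_neqE_nat)
        thus ?thesis using ij sym by (auto intro!: image_eqI[where x="(j,i)"])
      qed
    next
      fix x assume "x \<in> (\<lambda>(i,j). {i,j}) ` ?S1"
      then obtain i j where "x = {i,j}" "i\<in>{1..n}" "j\<in>{1..n}" "E i j" by auto
      thus "x \<in> {{i, j} | i j. i \<in> {1..n} \<and> j \<in> {1..n} \<and> E i j}" by blast
    qed
    have "inj_on (\<lambda>(i,j). {i,j}) ?S1"
      unfolding inj_on_def by (clarsimp simp: doubleton_eq_iff)
    thus ?thesis unfolding num_edges_def eq by (simp add: card_image)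
  qed
  show ?thesis unfolding s1 s2 s3 s4 using s5 s6 s7 s8 by simp
qed

lemma Bm_sum_zero:
  assumes g: "simple_graph n E" and m: "num_edges n E \<ge> 1"
  shows "(\<Sum>i\<in>{1..n}. \<Sum>j\<in>{1..n}. Bm n E i j) = 0"
proof -
  define m2 where "m2 = 2 * real (num_edges n E)"
  have m2pos: "m2 > 0" using m by (simp add: m2_def)
  have D: "(\<Sum>i\<in>{1..n}. degree n E i) = m2"
    using handshake[OF g] by (simp add: degree_def m2_def)
  have "(\<Sum>i\<in>{1..n}. \<Sum>j\<in>{1..n}. degree n E i * degree n E j / m2)
        = (\<Sum>i\<in>{1..n}. degree n E i) * (\<Sum>j\<in>{1..n}. degree n E j) / m2"
    by (simp add: sum_product sum_divide_distrib)
  also have "\<dots> = m2" using D m2pos by simp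
  finally have X: "(\<Sum>i\<in>{1..n}. \<Sum>j\<in>{1..n}. degree n E i * degree n E j / m2) = m2" .
  have "(\<Sum>i\<in>{1..n}. \<Sum>j\<in>{1..n}. Bm n E i j)
     = (\<Sum>i\<in>{1..n}. \<Sum>j\<in>{1..n}. adj E i j) - (\<Sum>i\<in>{1..n}. \<Sum>j\<in>{1..n}. degree n E i * degree n E j / m2)"
    unfolding Bm_def m2_def by (simp add: sum_subtractf)
  also have "\<dots> = 0" using X handshake[OF g] by (simp add: m2_def)
  finally show ?thesis .
qed

lemma count_ne:
  assumes "a \<in> L" "b \<in> L" "a \<noteq> b"
  shows "card {f \<in> PiE L (\<lambda>_. K). f a = f b} = card (PiE (L - {a}) (\<lambda>_. K))"
proof -
  let ?phi = "\<lambda>g. g(a := g b)"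
  have inj: "inj_on ?phi (PiE (L - {a}) (\<lambda>_. K))"
  proof (rule inj_onI)
    fix g1 g2 assume g1: "g1 \<in> PiE (L - {a}) (\<lambda>_. K)" and g2: "g2 \<in> PiE (L - {a}) (\<lambda>_. K)"
      and eq: "?phi g1 = ?phi g2"
    show "g1 = g2"
    proof (rule PiE_ext[OF g1 g2])
      fix i assume "i \<in> L - {a}"
      hence "i \<noteq> a" by simp
      thus "g1 i = g2 i" using fun_cong[OF eq, of i] by simp
    qed
  qed
  have ins: "insert a (L - {a}) = L" using assms(1) by blast
  have im: "{f \<in> PiE L (\<lambda>_. K). f a = f b} = ?phi ` PiE (L - {a}) (\<lambda>_. K)"
  proof (rule set_eqI, rule iffI)
    fix f assume f: "f \<in> {f \<in> PiE L (\<lambda>_. K). f a = f b}"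
    hence fP: "f \<in> PiE (insert a (L - {a})) (\<lambda>_. K)" and fab: "f a = f b" using ins by auto
    let ?g = "f(a := undefined)"
    have gP: "?g \<in> PiE (L - {a}) (\<lambda>_. K)" by (rule fun_upd_in_PiE[OF _ fP]) simp
    have "?phi ?g = f(a := f b)" using assms(3) by simp
    also have "\<dots> = f" using fab by (metis fun_upd_triv)
    finally have "f = ?phi ?g" by simp
    thus "f \<in> ?phi ` PiE (L - {a}) (\<lambda>_. K)" using gP by (rule image_eqI)
  next
    fix f assume "f \<in> ?phi ` PiE (L - {a}) (\<lambda>_. K)"
    then obtain g where g: "g \<in> PiE (L - {a}) (\<lambda>_. K)" and f: "f = ?phi g" by blast
    have gb: "g b \<in> K" using PiE_mem[OF g] assms(2,3) by simp
    have "f \<in> PiE (insert a (L - {a})) (\<lambda>_. K)" unfolding f by (rule PiE_fun_upd[OF gb g])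
    hence "f \<in> PiE L (\<lambda>_. K)" using ins by simp
    moreover have "f a = f b" using assms(3) unfolding f by simp
    ultimately show "f \<in> {f \<in> PiE L (\<lambda>_. K). f a = f b}" by simp
  qed
  show ?thesis unfolding im by (rule card_image[OF inj])
qed

lemma count_formula:
  assumes L: "finite L" "L \<noteq> {}" and ab: "a \<in> L" "b \<in> L"
  shows "real (card {f \<in> PiE L (\<lambda>_. {..<k::nat}). f a = f b})
     = real k ^ (card L - 1) + (real k ^ card L - real k ^ (card L - 1)) * (if a = b then 1 else 0)"
proof (cases "a = b")
  case True
  have "{f \<in> PiE L (\<lambda>_. {..<k}). f a = f b} = PiE L (\<lambda>_. {..<k})" using True by simp
  thus ?thesis using True L by (simp add: card_PiE)
next
  case False
  have "card {f \<in> PiE L (\<lambda>_. {..<k}). f a = f b} = card (PiE (L - {a}) (\<lambda>_. {..<k}))"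
    by (rule count_ne[OF ab False])
  also have "\<dots> = k ^ card (L - {a})" using L by (simp add: card_PiE)
  also have "card (L - {a}) = card L - 1" using L ab by simp
  finally show ?thesis using False by simp
qed

lemma sum_swap3:
  fixes X :: "'f \<Rightarrow> nat \<Rightarrow> nat \<Rightarrow> real"
  shows "(\<Sum>f\<in>F. \<Sum>i\<in>I. \<Sum>j\<in>J. X f i j) = (\<Sum>i\<in>I. \<Sum>j\<in>J. \<Sum>f\<in>F. X f i j)"
proof -
  have "(\<Sum>f\<in>F. \<Sum>i\<in>I. \<Sum>j\<in>J. X f i j) = (\<Sum>i\<in>I. \<Sum>f\<in>F. \<Sum>j\<in>J. X f i j)"
    by (rule sum.swap)
  also have "\<dots> = (\<Sum>i\<in>I. \<Sum>j\<in>J. \<Sum>f\<in>F. X f i j)"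
    by (rule sum.cong[OF refl], rule sum.swap)
  finally show ?thesis .
qed

lemma sum_lin2:
  fixes X Y :: "nat \<Rightarrow> nat \<Rightarrow> real" and A B :: real
  shows "(\<Sum>i\<in>I. \<Sum>j\<in>J. X i j * (A + B * Y i j)) = A * (\<Sum>i\<in>I. \<Sum>j\<in>J. X i j) + B * (\<Sum>i\<in>I. \<Sum>j\<in>J. X i j * Y i j)"
proof -
  have "\<And>i j. X i j * (A + B * Y i j) = A * X i j + B * (X i j * Y i j)" by (simp add: algebra_simps)
  thus ?thesis by (simp add: sum.distrib sum_distrib_left)
qed

lemma averaging:
  fixes h :: "nat \<Rightarrow> 'a"
  assumes g: "simple_graph n E" and m: "num_edges n E \<ge> 1" and k: "k \<ge> 1" and n: "n \<ge> 1"
  shows "\<exists>f \<in> PiE (h ` {1..n}) (\<lambda>_. {..<k}). Ql n E (f \<circ> h) \<ge> (1 - 1 / real k) * Ql n E h"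
proof (rule ccontr)
  assume contra: "\<not> ?thesis"
  define L where "L = h ` {1..n}"
  define F where "F = PiE L (\<lambda>_. {..<k})"
  define p where "p = card L"
  define c where "c = 1 / (2 * real (num_edges n E))"
  have Lfin: "finite L" and Lne: "L \<noteq> {}" using n by (auto simp: L_def)
  have p1: "p \<ge> 1" using Lfin Lne by (simp add: p_def Suc_le_eq card_gt_0_iff)
  have cardF: "card F = k ^ p" using Lfin by (simp add: F_def card_PiE p_def)
  have Ffin: "finite F" using Lfin by (simp add: F_def finite_PiE)
  have Fne: "F \<noteq> {}" using cardF k by (metis card.empty one_le_power power_eq_0_iff zero_neq_one le_zero_eq not_one_le_zero)
  have lt: "\<And>f. f \<in> F \<Longrightarrow> Ql n E (f \<circ> h) < (1 - 1 / real k) * Ql n E h"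
    using contra by (auto simp: F_def L_def not_le)
  have cnt: "\<And>i j. i \<in> {1..n} \<Longrightarrow> j \<in> {1..n} \<Longrightarrow>
      (\<Sum>f\<in>F. (if f (h i) = f (h j) then 1 else 0 :: real))
      = real k ^ (p - 1) + (real k ^ p - real k ^ (p - 1)) * (if h i = h j then 1 else 0)"
  proof -
    fix i j assume ij: "i \<in> {1..n}" "j \<in> {1..n}"
    have "(\<Sum>f\<in>F. (if f (h i) = f (h j) then 1 else 0 :: real))
        = (\<Sum>f\<in>{f\<in>F. f (h i) = f (h j)}. 1)"
      by (rule sum.inter_filter[symmetric, OF Ffin])
    also have "\<dots> = real (card {f\<in>F. f (h i) = f (h j)})" by simp
    also have "\<dots> = real k ^ (p - 1) + (real k ^ p - real k ^ (p - 1)) * (if h i = h j then 1 else 0)"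
      unfolding F_def p_def by (rule count_formula[OF Lfin Lne]) (use ij in \<open>auto simp: L_def\<close>)
    finally show "(\<Sum>f\<in>F. (if f (h i) = f (h j) then 1 else 0 :: real))
      = real k ^ (p - 1) + (real k ^ p - real k ^ (p - 1)) * (if h i = h j then 1 else 0)" .
  qed
  have "(\<Sum>f\<in>F. Ql n E (f \<circ> h))
      = c * (\<Sum>f\<in>F. \<Sum>i\<in>{1..n}. \<Sum>j\<in>{1..n}. Bm n E i j * (if f (h i) = f (h j) then 1 else 0))"
    by (simp add: Ql_def c_def sum_distrib_left)
  also have "\<dots> = c * (\<Sum>i\<in>{1..n}. \<Sum>j\<in>{1..n}. \<Sum>f\<in>F. Bm n E i j * (if f (h i) = f (h j) then 1 else 0))"
    by (simp only: sum_swap3)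
  also have "\<dots> = c * (\<Sum>i\<in>{1..n}. \<Sum>j\<in>{1..n}. Bm n E i j * (\<Sum>f\<in>F. (if f (h i) = f (h j) then 1 else 0)))"
    by (simp only: sum_distrib_left)
  also have "\<dots> = c * (\<Sum>i\<in>{1..n}. \<Sum>j\<in>{1..n}. Bm n E i j *
       (real k ^ (p - 1) + (real k ^ p - real k ^ (p - 1)) * (if h i = h j then 1 else 0)))"
    by (intro arg_cong[where f="(*) c"] sum.cong refl) (simp add: cnt)
  also have "\<dots> = c * (real k ^ (p - 1) * (\<Sum>i\<in>{1..n}. \<Sum>j\<in>{1..n}. Bm n E i j)
       + (real k ^ p - real k ^ (p - 1)) * (\<Sum>i\<in>{1..n}. \<Sum>j\<in>{1..n}. Bm n E i j * (if h i = h j then 1 else 0)))"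
    by (simp only: sum_lin2)
  also have "\<dots> = (real k ^ p - real k ^ (p - 1)) * Ql n E h"
    using Bm_sum_zero[OF g m] by (simp add: Ql_def c_def)
  finally have total: "(\<Sum>f\<in>F. Ql n E (f \<circ> h)) = (real k ^ p - real k ^ (p - 1)) * Ql n E h" .
  have kp: "real k ^ p - real k ^ (p - 1) = real k ^ p * (1 - 1 / real k)"
  proof -
    have "real k ^ p = real k * real k ^ (p - 1)" using p1 by (metis Suc_diff_1 less_le_trans zero_less_one power_Suc)
    thus ?thesis using k by (simp add: field_simps)
  qed
  have "(\<Sum>f\<in>F. Ql n E (f \<circ> h)) < (\<Sum>f\<in>F. (1 - 1 / real k) * Ql n E h)"
    by (rule sum_strict_mono[OF Ffin Fne lt])
  also have "\<dots> = real k ^ p * ((1 - 1 / real k) * Ql n E h)" using cardF by simp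
  finally show False using total kp by simp
qed

lemma parts_finite: "finite {P. partition_on {1..n::nat} P \<and> card P = i}"
  by (rule finite_subset[OF _ finitely_many_partition_on[of "{1..n::nat}"]]) auto

lemma parts_nonempty:
  assumes "1 \<le> i" "i \<le> n"
  shows "part_of n (\<lambda>j. min j i) \<in> {P. partition_on {1..n} P \<and> card P = i}"
proof -
  have "(\<lambda>j. min j i) ` {1..n} = {1..i}"
  proof (rule set_eqI, rule iffI)
    fix x assume "x \<in> (\<lambda>j. min j i) ` {1..n}"
    thus "x \<in> {1..i}" using assms by auto
  next
    fix x assume x: "x \<in> {1..i}"
    hence "x = min x i" "x \<in> {1..n}" using assms by auto
    thus "x \<in> (\<lambda>j. min j i) ` {1..n}" by (rule image_eqI)
  qed
  thus ?thesis using part_of_partition[of n] part_of_card[of n "\<lambda>j. min j i"] by simp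
qed

lemma modularity_le_Qk:
  assumes "partition_on {1..n} P" "card P = i"
  shows "modularity n E P \<le> Qk n E i"
  unfolding Qk_def
proof (rule Max_ge)
  show "finite (modularity n E ` {P. partition_on {1..n} P \<and> card P = i})"
    by (rule finite_imageI[OF parts_finite])
  show "modularity n E P \<in> modularity n E ` {P. partition_on {1..n} P \<and> card P = i}"
    using assms by blast
qed

lemma Qk_attained:
  assumes "1 \<le> i" "i \<le> n"
  shows "\<exists>P. partition_on {1..n} P \<and> card P = i \<and> Qk n E i = modularity n E P"
proof -
  let ?S = "{P. partition_on {1..n} P \<and> card P = i}"
  have "Max (modularity n E ` ?S) \<in> modularity n E ` ?S"
  proof (rule Max_in)
    show "finite (modularity n E ` ?S)" by (rule finite_imageI[OF parts_finite])
    show "modularity n E ` ?S \<noteq> {}" using parts_nonempty[OF assms] by blast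
  qed
  thus ?thesis unfolding Qk_def by auto
qed

theorem lemma1:
  fixes n k :: nat and E :: "nat \<Rightarrow> nat \<Rightarrow> bool"
  assumes "simple_graph n E"
    and "num_edges n E \<ge> 1"
    and "1 \<le> k" and "k \<le> n"
  shows "Qk_plus n E k \<ge> (1 - 1 / real k) * Q_opt n E"
proof -
  have n1: "n \<ge> 1" using assms by simp
  have "Max ((\<lambda>i. Qk n E i) ` {1..n}) \<in> (\<lambda>i. Qk n E i) ` {1..n}"
    by (rule Max_in) (use n1 in auto)
  then obtain i0 where i0: "i0 \<in> {1..n}" "Q_opt n E = Qk n E i0"
    unfolding Q_opt_def Qk_plus_def by auto
  obtain P0 where P0: "partition_on {1..n} P0" "Qk n E i0 = modularity n E P0"
    using Qk_attained[of i0 n E] i0 by auto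
  define h where "h = cls P0"
  have Qh: "modularity n E P0 = Ql n E h"
    by (rule modularity_Ql) (simp add: h_def partition_same[OF P0(1)])
  obtain f where f: "f \<in> PiE (h ` {1..n}) (\<lambda>_. {..<k})"
    and fq: "Ql n E (f \<circ> h) \<ge> (1 - 1 / real k) * Ql n E h"
    using averaging[OF assms(1,2,3) n1, of h] by blast
  define P1 where "P1 = part_of n (f \<circ> h)"
  define c1 where "c1 = card P1"
  have c1eq: "c1 = card ((f \<circ> h) ` {1..n})" by (simp add: c1_def P1_def part_of_card)
  have sub: "(f \<circ> h) ` {1..n} \<subseteq> {..<k}" using f by (auto simp: PiE_iff)
  have "c1 \<le> card {..<k}" unfolding c1eq by (rule card_mono[OF _ sub]) simp
  hence c1k: "c1 \<le> k" by simp
  have "(f \<circ> h) ` {1..n} \<noteq> {}" using n1 by auto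
  hence c1pos: "c1 \<ge> 1" unfolding c1eq by (simp add: Suc_le_eq card_gt_0_iff)
  have Q1: "modularity n E P1 = Ql n E (f \<circ> h)"
    unfolding P1_def by (rule modularity_Ql) (simp add: part_of_same)
  have "modularity n E P1 \<le> Qk n E (card P1)"
    unfolding P1_def by (rule modularity_le_Qk[OF part_of_partition refl])
  hence "modularity n E P1 \<le> Qk n E c1" by (simp add: c1_def)
  also have "Qk n E c1 \<le> Qk_plus n E k"
    unfolding Qk_plus_def by (rule Max_ge) (use c1k c1pos in auto)
  finally have "modularity n E P1 \<le> Qk_plus n E k" .
  moreover have "Q_opt n E = Ql n E h" using i0 P0 Qh by simp
  ultimately show ?thesis using Q1 fq by simp
qed

end
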